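(* Let $X$, $Y$ be metrizable spaces, $f:X\to Y$, and let $\xi$ be a countable ordinal with $\xi>1$. The following are equivalent: (i) $f^{-1}(A)\in\mathbf{\Sigma}^0_\xi(X)$ for every $A\in\mathbf{\Sigma}^0_\xi(Y)$; (ii) $f^{-1}(A)\in\mathbf{\Pi}^0_\xi(X)$ for every $A\in\mathbf{\Pi}^0_\xi(Y)$; (iii) $f^{-1}(A)\in\mathbf{\Delta}^0_\xi(X)$ for every $A\in\mathbf{\Delta}^0_\xi(Y)$; (iv) $f^{-1}(A)\in\mathbf{\Sigma}^0_\xi(X)$ for every $\nu<\xi$ and every $A\in\mathbf{\Pi}^0_\nu(Y)$; (v) $f^{-1}(A)\in\mathbf{\Delta}^0_\xi(X)$ for every $\nu<\xi$ and every $A\in\mathbf{\Sigma}^0_\nu(Y)$.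
   Context: Work in ZF plus countable choice over the reals. $\mathbf{\Sigma}^0_\nu,\mathbf{\Pi}^0_\nu,\mathbf{\Delta}^0_\nu$ denote the levels of the Borel hierarchy, with the convention $\mathbf{\Sigma}^0_0=\mathbf{\Pi}^0_0=\mathbf{\Delta}^0_0=\mathbf{\Delta}^0_1$ (the clopen sets). *)

theory Defs
  imports "HOL-Analysis.Analysis"
begin

text \<open>Ordinals are represented as elements of an arbitrary well-ordered type 'o
  (class wellorder); a countable ordinal is an element with countably many predecessors.\<close>

definition ord_zero :: "'o::wellorder \<Rightarrow> bool" where
  "ord_zero \<nu> \<longleftrightarrow> (\<forall>\<mu>. \<not> \<mu> < \<nu>)"

definition ord_one :: "'o::wellorder \<Rightarrow> bool" where
  "ord_one \<nu> \<longleftrightarrow> \<not> ord_zero \<nu> \<and> (\<forall>\<mu>. \<mu> < \<nu> \<longrightarrow> ord_zero \<mu>)"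

definition borel_sigma_step ::
  "'a topology \<Rightarrow> ('o::wellorder \<Rightarrow> 'a set set) \<Rightarrow> 'o \<Rightarrow> 'a set set" where
  "borel_sigma_step X F \<nu> =
     (if ord_zero \<nu> then {A. openin X A \<and> closedin X A}
      else if ord_one \<nu> then {A. openin X A}
      else {\<Union> (range U) | U :: nat \<Rightarrow> 'a set.
              \<forall>n. \<exists>\<mu>. \<mu> < \<nu> \<and> \<not> ord_zero \<mu> \<and> (\<exists>B \<in> F \<mu>. U n = topspace X - B)})"

definition borel_Sigma :: "'a topology \<Rightarrow> 'o::wellorder \<Rightarrow> 'a set set" where
  "borel_Sigma X = wfrec {(\<mu>, \<nu>). \<mu> < \<nu>} (borel_sigma_step X)"

definition borel_Pi :: "'a topology \<Rightarrow> 'o::wellorder \<Rightarrow> 'a set set" where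
  "borel_Pi X \<nu> = {topspace X - A | A. A \<in> borel_Sigma X \<nu>}"

definition borel_Delta :: "'a topology \<Rightarrow> 'o::wellorder \<Rightarrow> 'a set set" where
  "borel_Delta X \<nu> = borel_Sigma X \<nu> \<inter> borel_Pi X \<nu>"

end

theory Submission
  imports Defs
begin

lemma wf_less_rel: "wf {(\<mu>, \<nu>). (\<mu>::'o::wellorder) < \<nu>}"
  using wf by (simp add: wf_def)

lemma step_cong:
  assumes "\<And>\<mu>. \<mu> < \<nu> \<Longrightarrow> F \<mu> = G \<mu>"
  shows "borel_sigma_step X F \<nu> = borel_sigma_step X G \<nu>"
  unfolding borel_sigma_step_def using assms by (simp cong: conj_cong)

lemma sigma_eq: "borel_Sigma X \<nu> = borel_sigma_step X (borel_Sigma X) \<nu>"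
proof -
  have "borel_Sigma X \<nu> = borel_sigma_step X (cut (borel_Sigma X) {(\<mu>, \<nu>). \<mu> < \<nu>} \<nu>) \<nu>"
    unfolding borel_Sigma_def by (rule wfrec[OF wf_less_rel])
  also have "\<dots> = borel_sigma_step X (borel_Sigma X) \<nu>"
    by (rule step_cong) (simp add: cut_apply)
  finally show ?thesis .
qed

lemma sigma_zero: "ord_zero \<nu> \<Longrightarrow> borel_Sigma X \<nu> = {A. openin X A \<and> closedin X A}"
  by (subst sigma_eq) (simp add: borel_sigma_step_def)

lemma sigma_one: "ord_one \<nu> \<Longrightarrow> borel_Sigma X \<nu> = {A. openin X A}"
  by (subst sigma_eq) (simp add: borel_sigma_step_def ord_one_def)

lemma sigma_high: "\<not> ord_zero \<nu> \<Longrightarrow> \<not> ord_one \<nu> \<Longrightarrow> borel_Sigma X \<nu> =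
   {\<Union> (range U) | U :: nat \<Rightarrow> _.
              \<forall>n. \<exists>\<mu>. \<mu> < \<nu> \<and> \<not> ord_zero \<mu> \<and> (\<exists>B \<in> borel_Sigma X \<mu>. U n = topspace X - B)}"
  by (subst sigma_eq) (simp add: borel_sigma_step_def)

lemma sigma_highI:
  fixes U :: "nat \<Rightarrow> 'a set"
  assumes "\<not> ord_zero \<nu>" "\<not> ord_one \<nu>" "A = \<Union> (range U)"
    "\<forall>n. \<exists>\<mu>. \<mu> < \<nu> \<and> \<not> ord_zero \<mu> \<and> (\<exists>B \<in> borel_Sigma X \<mu>. U n = topspace X - B)"
  shows "A \<in> borel_Sigma X \<nu>"
  unfolding sigma_high[OF assms(1,2)] mem_Collect_eq
  apply (rule exI[of _ U])
  using assms(3,4) by simp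

lemma sigma_highE:
  assumes "\<not> ord_zero \<nu>" "\<not> ord_one \<nu>" "A \<in> borel_Sigma X \<nu>"
  shows "\<exists>U::nat \<Rightarrow> 'a set. A = \<Union> (range U) \<and>
    (\<forall>n. \<exists>\<mu>. \<mu> < \<nu> \<and> \<not> ord_zero \<mu> \<and> (\<exists>B \<in> borel_Sigma X \<mu>. U n = topspace X - B))"
  using assms(3) unfolding sigma_high[OF assms(1,2)] mem_Collect_eq .

lemma sigma_sub: assumes hA: "A \<in> borel_Sigma X \<nu>" shows "A \<subseteq> topspace X"
proof (cases "ord_zero \<nu>")
  case True
  then have "openin X A" using hA sigma_zero[OF True] by blast
  then show ?thesis by (rule openin_subset)
next
  case False
  show ?thesis
  proof (cases "ord_one \<nu>")
    case True
    then have "openin X A" using hA sigma_one[OF True] by blast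
    then show ?thesis by (rule openin_subset)
  next
    case F: False
    obtain U :: "nat \<Rightarrow> _" where U: "A = \<Union> (range U)" "\<forall>n. \<exists>\<mu>. \<mu> < \<nu> \<and> \<not> ord_zero \<mu> \<and> (\<exists>B \<in> borel_Sigma X \<mu>. U n = topspace X - B)"
      using sigma_highE[OF False F hA] by (elim exE conjE) 
    have "U n \<subseteq> topspace X" for n
    proof -
      from U(2) obtain \<mu> B where "U n = topspace X - B" by meson
      then show ?thesis by simp
    qed
    then show ?thesis unfolding U(1) by (simp add: UN_subset_iff)
  qed
qed

lemma exists_one:
  fixes \<xi> :: "'o::wellorder"
  assumes "\<not> ord_zero \<xi>" "\<not> ord_one \<xi>"
  shows "\<exists>w. w < \<xi> \<and> ord_one w"
proof -
  from assms obtain \<mu> where m: "\<mu> < \<xi>" "\<not> ord_zero \<mu>" unfolding ord_one_def by blast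
  define w :: 'o where "w = (LEAST \<mu>. \<not> ord_zero \<mu>)"
  have o1: "\<not> ord_zero w" unfolding w_def using LeastI[of "\<lambda>\<mu>. \<not> ord_zero \<mu>" \<mu>] m(2) by blast
  have o2: "w \<le> \<mu>" unfolding w_def using Least_le[of "\<lambda>\<mu>. \<not> ord_zero \<mu>" \<mu>] m(2) by blast
  have "\<forall>\<mu>'. \<mu>' < w \<longrightarrow> ord_zero \<mu>'" unfolding w_def using not_less_Least by blast
  then have "ord_one w" using o1 unfolding ord_one_def by blast
  moreover have "w < \<xi>" using o2 m(1) by (rule le_less_trans)
  ultimately show ?thesis by blast
qed

lemma pi_in_sigma:
  fixes \<xi> \<nu> :: "'o::wellorder"
  assumes "\<not> ord_zero \<xi>" "\<not> ord_one \<xi>" "\<nu> < \<xi>" "A \<in> borel_Pi X \<nu>"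
  shows "A \<in> borel_Sigma X \<xi>"
proof (cases "ord_zero \<nu>")
  case True
  obtain B where B: "A = topspace X - B" "B \<in> borel_Sigma X \<nu>" using assms(4) by (auto simp: borel_Pi_def)
  then have "openin X B" "closedin X B" using True by (auto simp: sigma_zero)
  then have cA: "openin X A" "closedin X A" using B by auto
  obtain w where w: "w < \<xi>" "ord_one w" using exists_one assms by blast
  have "topspace X - A \<in> borel_Sigma X w" using w cA by (auto simp: sigma_one)
  moreover have "A = topspace X - (topspace X - A)" using cA closedin_subset by blast
  moreover have "\<not> ord_zero w" using w unfolding ord_one_def by blast
  ultimately show ?thesis using assms w
    by (intro sigma_highI[where U="\<lambda>n. A"]) auto
next
  case False
  obtain B where B: "A = topspace X - B" "B \<in> borel_Sigma X \<nu>" using assms(4) by (auto simp: borel_Pi_def)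
  show ?thesis using assms False B
    by (intro sigma_highI[where U="\<lambda>n. A"]) auto
qed

lemma sigma_mono:
  fixes \<xi> \<nu> :: "'o::wellorder"
  assumes X: "metrizable_space X" and "\<not> ord_zero \<xi>" "\<not> ord_one \<xi>" "\<nu> < \<xi>" "A \<in> borel_Sigma X \<nu>"
  shows "A \<in> borel_Sigma X \<xi>"
proof (cases "ord_zero \<nu>")
  case True
  then have cA: "openin X A" "closedin X A" using assms(5) sigma_zero[OF True] by auto
  have "topspace X - A \<in> borel_Sigma X \<nu>" using cA sigma_zero[OF True] by auto
  moreover have "A = topspace X - (topspace X - A)" using cA closedin_subset by blast
  ultimately have "A \<in> borel_Pi X \<nu>" unfolding borel_Pi_def by (intro CollectI exI[of _ "topspace X - A"]) simp
  then show ?thesis by (rule pi_in_sigma[OF assms(2,3,4)])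
next
  case False
  show ?thesis
  proof (cases "ord_one \<nu>")
    case True
    then have "openin X A" using assms(5) sigma_one[OF True] by auto
    then have "fsigma_in X A" using open_imp_fsigma_in[OF X] by blast
    then obtain C :: "nat \<Rightarrow> 'a set" where C: "\<And>n. closedin X (C n)" "\<Union> (range C) = A"
      unfolding fsigma_in_ascending by metis
    have "\<forall>n. \<exists>\<mu>. \<mu> < \<xi> \<and> \<not> ord_zero \<mu> \<and> (\<exists>B \<in> borel_Sigma X \<mu>. C n = topspace X - B)"
    proof
      fix n
      have "topspace X - C n \<in> borel_Sigma X \<nu>" using C sigma_one[OF True, of X] by auto
      moreover have "C n = topspace X - (topspace X - C n)" using C closedin_subset by blast
      ultimately show "\<exists>\<mu>. \<mu> < \<xi> \<and> \<not> ord_zero \<mu> \<and> (\<exists>B \<in> borel_Sigma X \<mu>. C n = topspace X - B)"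
        using False assms(4) by (intro exI[of _ \<nu>] conjI bexI[of _ "topspace X - C n"])
    qed
    then show ?thesis by (rule sigma_highI[OF assms(2,3) C(2)[symmetric]])
  next
    case F: False
    obtain U :: "nat \<Rightarrow> 'a set" where U: "A = \<Union> (range U)"
      "\<forall>n. \<exists>\<mu>. \<mu> < \<nu> \<and> \<not> ord_zero \<mu> \<and> (\<exists>B \<in> borel_Sigma X \<mu>. U n = topspace X - B)"
      using sigma_highE[OF False F assms(5)] by blast
    have "\<forall>n. \<exists>\<mu>. \<mu> < \<xi> \<and> \<not> ord_zero \<mu> \<and> (\<exists>B \<in> borel_Sigma X \<mu>. U n = topspace X - B)"
    proof
      fix n
      from U(2) obtain \<mu> B where "\<mu> < \<nu>" "\<not> ord_zero \<mu>" "B \<in> borel_Sigma X \<mu>" "U n = topspace X - B"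
        by blast
      moreover have "\<mu> < \<xi>" using \<open>\<mu> < \<nu>\<close> assms(4) by (rule less_trans)
      ultimately show "\<exists>\<mu>. \<mu> < \<xi> \<and> \<not> ord_zero \<mu> \<and> (\<exists>B \<in> borel_Sigma X \<mu>. U n = topspace X - B)"
        by blast
    qed
    then show ?thesis by (rule sigma_highI[OF assms(2,3) U(1)])
  qed
qed

lemma sigma_Union:
  fixes \<xi> :: "'o::wellorder" and A :: "nat \<Rightarrow> 'a set"
  assumes "\<not> ord_zero \<xi>" "\<not> ord_one \<xi>" "\<And>n. A n \<in> borel_Sigma X \<xi>"
  shows "\<Union> (range A) \<in> borel_Sigma X \<xi>"
proof -
  have "\<forall>n. \<exists>U::nat \<Rightarrow> 'a set. A n = \<Union> (range U) \<and> (\<forall>m. \<exists>\<mu>. \<mu> < \<xi> \<and> \<not> ord_zero \<mu> \<and> (\<exists>B \<in> borel_Sigma X \<mu>. U m = topspace X - B))"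
    using sigma_highE[OF assms(1,2) assms(3)] by blast
  then obtain U :: "nat \<Rightarrow> nat \<Rightarrow> 'a set" where U: "\<And>n. A n = \<Union> (range (U n))"
    "\<And>n m. \<exists>\<mu>. \<mu> < \<xi> \<and> \<not> ord_zero \<mu> \<and> (\<exists>B \<in> borel_Sigma X \<mu>. U n m = topspace X - B)"
    by metis
  define V where "V k = (case prod_decode k of (n, m) \<Rightarrow> U n m)" for k
  have "\<Union> (range A) = \<Union> (range V)"
  proof
    show "\<Union> (range A) \<subseteq> \<Union> (range V)"
    proof
      fix x assume "x \<in> \<Union> (range A)"
      then obtain n m where "x \<in> U n m" using U(1) by auto
      then have "x \<in> V (prod_encode (n, m))" by (simp add: V_def)
      then show "x \<in> \<Union> (range V)" by blast
    qed
    show "\<Union> (range V) \<subseteq> \<Union> (range A)"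
    proof
      fix x assume "x \<in> \<Union> (range V)"
      then obtain k where "x \<in> V k" by auto
      then obtain n m where "x \<in> U n m" by (auto simp: V_def split: prod.splits)
      then show "x \<in> \<Union> (range A)" using U(1) by auto
    qed
  qed
  moreover have "\<forall>k. \<exists>\<mu>. \<mu> < \<xi> \<and> \<not> ord_zero \<mu> \<and> (\<exists>B \<in> borel_Sigma X \<mu>. V k = topspace X - B)"
    using U(2) by (simp add: V_def split: prod.splits)
  ultimately show ?thesis by (rule sigma_highI[OF assms(1,2)])
qed

lemma preimage_diff:
  assumes "f \<in> topspace X \<rightarrow> topspace Y"
  shows "{x \<in> topspace X. f x \<in> topspace Y - B} = topspace X - {x \<in> topspace X. f x \<in> B}"
  using assms by auto

theorem mainTheorem7:
  fixes X :: "'a topology" and Y :: "'b topology" and f :: "'a \<Rightarrow> 'b"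
    and \<xi> :: "'o::wellorder"
  assumes "metrizable_space X" and "metrizable_space Y"
    and "f \<in> topspace X \<rightarrow> topspace Y"
    and "countable {..<\<xi>}"
    and "\<not> ord_zero \<xi>" and "\<not> ord_one \<xi>"
  shows "((\<forall>A \<in> borel_Sigma Y \<xi>. {x \<in> topspace X. f x \<in> A} \<in> borel_Sigma X \<xi>)
          \<longleftrightarrow> (\<forall>A \<in> borel_Pi Y \<xi>. {x \<in> topspace X. f x \<in> A} \<in> borel_Pi X \<xi>))
       \<and> ((\<forall>A \<in> borel_Sigma Y \<xi>. {x \<in> topspace X. f x \<in> A} \<in> borel_Sigma X \<xi>)
          \<longleftrightarrow> (\<forall>A \<in> borel_Delta Y \<xi>. {x \<in> topspace X. f x \<in> A} \<in> borel_Delta X \<xi>))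
       \<and> ((\<forall>A \<in> borel_Sigma Y \<xi>. {x \<in> topspace X. f x \<in> A} \<in> borel_Sigma X \<xi>)
          \<longleftrightarrow> (\<forall>\<nu> < \<xi>. \<forall>A \<in> borel_Pi Y \<nu>. {x \<in> topspace X. f x \<in> A} \<in> borel_Sigma X \<xi>))
       \<and> ((\<forall>A \<in> borel_Sigma Y \<xi>. {x \<in> topspace X. f x \<in> A} \<in> borel_Sigma X \<xi>)
          \<longleftrightarrow> (\<forall>\<nu> < \<xi>. \<forall>A \<in> borel_Sigma Y \<nu>. {x \<in> topspace X. f x \<in> A} \<in> borel_Delta X \<xi>))"
proof -
  define P where "P A = {x \<in> topspace X. f x \<in> A}" for A
  have Pd: "P (topspace Y - B) = topspace X - P B" for B
    unfolding P_def using preimage_diff[OF assms(3)] .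
  have Psub: "P B \<subseteq> topspace X" for B unfolding P_def by auto
  define S1 where "S1 = (\<forall>A \<in> borel_Sigma Y \<xi>. P A \<in> borel_Sigma X \<xi>)"
  define S2 where "S2 = (\<forall>A \<in> borel_Pi Y \<xi>. P A \<in> borel_Pi X \<xi>)"
  define S3 where "S3 = (\<forall>A \<in> borel_Delta Y \<xi>. P A \<in> borel_Delta X \<xi>)"
  define S4 where "S4 = (\<forall>\<nu> < \<xi>. \<forall>A \<in> borel_Pi Y \<nu>. P A \<in> borel_Sigma X \<xi>)"
  define S5 where "S5 = (\<forall>\<nu> < \<xi>. \<forall>A \<in> borel_Sigma Y \<nu>. P A \<in> borel_Delta X \<xi>)"
  have compl: "C \<in> borel_Sigma Z \<xi> \<Longrightarrow> topspace Z - (topspace Z - C) = C" for Z :: "'c topology" and C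
    using sigma_sub by blast
  have 12: "S1 \<longleftrightarrow> S2"
  proof
    assume S1
    show S2 unfolding S2_def
    proof
      fix A assume "A \<in> borel_Pi Y \<xi>"
      then obtain B where "A = topspace Y - B" "B \<in> borel_Sigma Y \<xi>" by (auto simp: borel_Pi_def)
      then show "P A \<in> borel_Pi X \<xi>" using \<open>S1\<close> Pd unfolding S1_def borel_Pi_def by auto
    qed
  next
    assume S2
    show S1 unfolding S1_def
    proof
      fix A assume A: "A \<in> borel_Sigma Y \<xi>"
      then have "topspace Y - A \<in> borel_Pi Y \<xi>" by (auto simp: borel_Pi_def)
      then have "P (topspace Y - A) \<in> borel_Pi X \<xi>" using \<open>S2\<close> S2_def by blast
      then obtain C where C: "topspace X - P A = topspace X - C" "C \<in> borel_Sigma X \<xi>"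
        by (auto simp: borel_Pi_def Pd)
      have "P A = C" using C Psub[of A] sigma_sub[OF C(2)] by blast
      then show "P A \<in> borel_Sigma X \<xi>" using C by simp
    qed
  qed
  have 13: "S1 \<longleftrightarrow> S3"
  proof
    assume S1
    with 12 have S2 by simp
    then show S3 using \<open>S1\<close> unfolding S1_def S2_def S3_def borel_Delta_def by blast
  next
    assume S3
    have S5 unfolding S5_def
    proof (intro allI impI ballI)
      fix \<nu> A assume "\<nu> < \<xi>" "A \<in> borel_Sigma Y \<nu>"
      then have "A \<in> borel_Sigma Y \<xi>" by (rule sigma_mono[OF assms(2,5,6)])
      moreover have "topspace Y - A \<in> borel_Sigma Y \<xi>"
        using pi_in_sigma[of \<xi> \<nu> "topspace Y - A" Y] \<open>\<nu> < \<xi>\<close> \<open>A \<in> borel_Sigma Y \<nu>\<close> assms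
        by (auto simp: borel_Pi_def)
      ultimately have "A \<in> borel_Delta Y \<xi>" unfolding borel_Delta_def borel_Pi_def
        using compl[of "A" Y] by auto
      then show "P A \<in> borel_Delta X \<xi>" using \<open>S3\<close> unfolding S3_def by auto
    qed
    then have S4 unfolding S4_def S5_def
    proof (intro allI impI ballI)
      fix \<nu> A assume H: "\<forall>\<nu><\<xi>. \<forall>A\<in>borel_Sigma Y \<nu>. P A \<in> borel_Delta X \<xi>" "\<nu> < \<xi>" "A \<in> borel_Pi Y \<nu>"
      then obtain B where B: "A = topspace Y - B" "B \<in> borel_Sigma Y \<nu>" by (auto simp: borel_Pi_def)
      then have "P B \<in> borel_Pi X \<xi>" using H by (auto simp: borel_Delta_def)
      then obtain C where "P B = topspace X - C" "C \<in> borel_Sigma X \<xi>" by (auto simp: borel_Pi_def)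
      then have "P A = C" using B Pd compl[of C X] by simp
      then show "P A \<in> borel_Sigma X \<xi>" using \<open>C \<in> borel_Sigma X \<xi>\<close> by simp
    qed
    show S1 unfolding S1_def
    proof
      fix A assume "A \<in> borel_Sigma Y \<xi>"
      then obtain U :: "nat \<Rightarrow> 'b set" where U: "A = \<Union> (range U)"
        "\<And>n. \<exists>\<mu>. \<mu> < \<xi> \<and> \<not> ord_zero \<mu> \<and> (\<exists>B \<in> borel_Sigma Y \<mu>. U n = topspace Y - B)"
        using sigma_highE[OF assms(5,6)] by blast
      have PU: "P (U n) \<in> borel_Sigma X \<xi>" for n
        using U(2)[of n] \<open>S4\<close> unfolding S4_def borel_Pi_def by blast
      have "\<Union> (range (\<lambda>n. P (U n))) \<in> borel_Sigma X \<xi>"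
        by (rule sigma_Union[OF assms(5,6)]) (rule PU)
      moreover have "P A = \<Union> (range (\<lambda>n. P (U n)))" unfolding U(1) P_def by auto
      ultimately show "P A \<in> borel_Sigma X \<xi>" by simp
    qed
  qed
  have 15: "S1 \<Longrightarrow> S5"
  proof -
    assume S1
    with 12 have S2 by simp
    show S5 unfolding S5_def
    proof (intro allI impI ballI)
      fix \<nu> A assume "\<nu> < \<xi>" "A \<in> borel_Sigma Y \<nu>"
      then have "A \<in> borel_Sigma Y \<xi>" by (rule sigma_mono[OF assms(2,5,6)])
      moreover have "topspace Y - A \<in> borel_Sigma Y \<xi>"
        using pi_in_sigma[of \<xi> \<nu> "topspace Y - A" Y] \<open>\<nu> < \<xi>\<close> \<open>A \<in> borel_Sigma Y \<nu>\<close> assms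
        by (auto simp: borel_Pi_def)
      ultimately have "A \<in> borel_Delta Y \<xi>" unfolding borel_Delta_def borel_Pi_def
        using compl[of "A" Y] by auto
      then have "A \<in> borel_Sigma Y \<xi>" "A \<in> borel_Pi Y \<xi>" unfolding borel_Delta_def by auto
      then have "P A \<in> borel_Sigma X \<xi>" "P A \<in> borel_Pi X \<xi>"
        using \<open>S1\<close> \<open>S2\<close> unfolding S1_def S2_def by auto
      then show "P A \<in> borel_Delta X \<xi>" unfolding borel_Delta_def by auto
    qed
  qed
  have 54: "S5 \<Longrightarrow> S4"
    unfolding S4_def S5_def
  proof (intro allI impI ballI)
    fix \<nu> A assume H: "\<forall>\<nu><\<xi>. \<forall>A\<in>borel_Sigma Y \<nu>. P A \<in> borel_Delta X \<xi>" "\<nu> < \<xi>" "A \<in> borel_Pi Y \<nu>"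
    then obtain B where B: "A = topspace Y - B" "B \<in> borel_Sigma Y \<nu>" by (auto simp: borel_Pi_def)
    then have "P B \<in> borel_Pi X \<xi>" using H by (auto simp: borel_Delta_def)
    then obtain C where "P B = topspace X - C" "C \<in> borel_Sigma X \<xi>" by (auto simp: borel_Pi_def)
    then have "P A = C" using B Pd compl[of C X] by simp
    then show "P A \<in> borel_Sigma X \<xi>" using \<open>C \<in> borel_Sigma X \<xi>\<close> by simp
  qed
  have 41: "S4 \<Longrightarrow> S1"
  proof -
    assume S4
    show S1 unfolding S1_def
    proof
      fix A assume "A \<in> borel_Sigma Y \<xi>"
      then obtain U :: "nat \<Rightarrow> 'b set" where U: "A = \<Union> (range U)"
        "\<And>n. \<exists>\<mu>. \<mu> < \<xi> \<and> \<not> ord_zero \<mu> \<and> (\<exists>B \<in> borel_Sigma Y \<mu>. U n = topspace Y - B)"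
        using sigma_highE[OF assms(5,6)] by blast
      have PU: "P (U n) \<in> borel_Sigma X \<xi>" for n
        using U(2)[of n] \<open>S4\<close> unfolding S4_def borel_Pi_def by blast
      have "\<Union> (range (\<lambda>n. P (U n))) \<in> borel_Sigma X \<xi>"
        by (rule sigma_Union[OF assms(5,6)]) (rule PU)
      moreover have "P A = \<Union> (range (\<lambda>n. P (U n)))" unfolding U(1) P_def by auto
      ultimately show "P A \<in> borel_Sigma X \<xi>" by simp
    qed
  qed
  have 14: "S1 \<Longrightarrow> S4" using 15 54 by blast
  have "(S1 \<longleftrightarrow> S2) \<and> (S1 \<longleftrightarrow> S3) \<and> (S1 \<longleftrightarrow> S4) \<and> (S1 \<longleftrightarrow> S5)"
    using 12 13 14 41 15 54 by blast
  then show ?thesis unfolding S1_def S2_def S3_def S4_def S5_def P_def .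
qed

end
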